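(* Let $\lambda$ and $\rho$ be two function quasi-norms over the same $\sigma$-finite measure space $(\Omega,\Sigma,\mu)$, and suppose $\rho$ has the weak Fatou property. Then $\rho$ dominates $\lambda$ if and only if $\{f\in L_0^+(\mu):\rho(f)<\infty\}\subseteq\{f\in L_0^+(\mu):\lambda(f)<\infty\}$.
   Context: $L_0^+(\mu)$: measurable functions $\Omega\to[0,\infty]$ modulo a.e. equality. A function quasi-norm is $\rho\colon L_0^+(\mu)\to[0,\infty]$ with (F1) $\rho(tf)=t\rho(f)$, $t\ge0$; (F2) $f\le g$ a.e. $\Rightarrow\rho(f)\le\rho(g)$; (F3) $\rho(\chi_E)<\infty$ if $\mu(E)<\infty$; (F4) for all $E$ with $\mu(E)<\infty$ and $\varepsilon>0$ there is $\delta>0$ with $\mu(A)\le\varepsilon$ whenever $A\subseteq E$ measurable and $\rho(\chi_A)\le\delta$; (F5) $\rho(f+g)\le\kappa(\rho(f)+\rho(g))$ for some constant $\kappa$. $\rho$ dominates $\lambda$ if there is $C$ with $\lambda(f)\le C\rho(f)$ for all $f\in L_0^+(\mu)$. $\rho$ has the weak Fatou property if $\rho(\lim_nf_n)<\infty$ for every non-decreasing $(f_n)$ in $L_0^+(\mu)$ with $\lim_n\rho(f_n)<\infty$. *)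

theory Defs
  imports "HOL-Analysis.Analysis"
begin

text \<open>L_0^+(mu) is represented by borel-measurable functions into ennreal = [0,\<infinity>];
  a.e.-invariance follows from monotonicity (F2) stated a.e.\<close>

definition function_quasi_norm :: "'a measure \<Rightarrow> (('a \<Rightarrow> ennreal) \<Rightarrow> ennreal) \<Rightarrow> bool" where
  "function_quasi_norm M \<rho> \<longleftrightarrow>
     (\<forall>f \<in> borel_measurable M. \<forall>t::real. t \<ge> 0 \<longrightarrow>
         \<rho> (\<lambda>x. ennreal t * f x) = ennreal t * \<rho> f) \<and>
     (\<forall>f \<in> borel_measurable M. \<forall>g \<in> borel_measurable M.
         (AE x in M. f x \<le> g x) \<longrightarrow> \<rho> f \<le> \<rho> g) \<and>
     (\<forall>E \<in> sets M. emeasure M E < \<infinity> \<longrightarrow> \<rho> (indicator E) < \<infinity>) \<and>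
     (\<forall>E \<in> sets M. emeasure M E < \<infinity> \<longrightarrow> (\<forall>\<epsilon>::real. \<epsilon> > 0 \<longrightarrow>
         (\<exists>\<delta>::real. \<delta> > 0 \<and> (\<forall>A \<in> sets M. A \<subseteq> E \<longrightarrow>
             \<rho> (indicator A) \<le> ennreal \<delta> \<longrightarrow> emeasure M A \<le> ennreal \<epsilon>)))) \<and>
     (\<exists>\<kappa>::real. \<forall>f \<in> borel_measurable M. \<forall>g \<in> borel_measurable M.
         \<rho> (\<lambda>x. f x + g x) \<le> ennreal \<kappa> * (\<rho> f + \<rho> g))"

definition dominates :: "'a measure \<Rightarrow> (('a \<Rightarrow> ennreal) \<Rightarrow> ennreal) \<Rightarrow> (('a \<Rightarrow> ennreal) \<Rightarrow> ennreal) \<Rightarrow> bool" where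
  "dominates M \<rho> lam \<longleftrightarrow> (\<exists>C::real. \<forall>f \<in> borel_measurable M. lam f \<le> ennreal C * \<rho> f)"

text \<open>Non-decreasing in L_0^+: a.e. non-decreasing; its limit is the (a.e.) pointwise supremum.\<close>
definition weak_Fatou :: "'a measure \<Rightarrow> (('a \<Rightarrow> ennreal) \<Rightarrow> ennreal) \<Rightarrow> bool" where
  "weak_Fatou M \<rho> \<longleftrightarrow>
     (\<forall>f :: nat \<Rightarrow> 'a \<Rightarrow> ennreal. (\<forall>n. f n \<in> borel_measurable M) \<longrightarrow>
        (\<forall>n. AE x in M. f n x \<le> f (Suc n) x) \<longrightarrow>
        (SUP n. \<rho> (f n)) < \<infinity> \<longrightarrow> \<rho> (\<lambda>x. SUP n. f n x) < \<infinity>)"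

end

theory Submission
  imports Defs
begin

lemma fqn_hom: "function_quasi_norm M \<rho> \<Longrightarrow> f \<in> borel_measurable M \<Longrightarrow> t \<ge> 0 \<Longrightarrow>
   \<rho> (\<lambda>x. ennreal t * f x) = ennreal t * \<rho> f"
proof -
  assume a: "function_quasi_norm M \<rho>" "f \<in> borel_measurable M" "t \<ge> 0"
  have "\<forall>f \<in> borel_measurable M. \<forall>t::real. t \<ge> 0 \<longrightarrow>
         \<rho> (\<lambda>x. ennreal t * f x) = ennreal t * \<rho> f"
    using a(1) unfolding function_quasi_norm_def by (rule conjunct1)
  then show ?thesis using a(2,3) by simp
qed

lemma fqn_mono: "function_quasi_norm M \<rho> \<Longrightarrow> f \<in> borel_measurable M \<Longrightarrow> g \<in> borel_measurable M \<Longrightarrow>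
   (\<And>x. f x \<le> g x) \<Longrightarrow> \<rho> f \<le> \<rho> g"
proof -
  assume a: "function_quasi_norm M \<rho>" "f \<in> borel_measurable M" "g \<in> borel_measurable M" "\<And>x. f x \<le> g x"
  have "\<forall>f \<in> borel_measurable M. \<forall>g \<in> borel_measurable M.
         (AE x in M. f x \<le> g x) \<longrightarrow> \<rho> f \<le> \<rho> g"
    using a(1) unfolding function_quasi_norm_def by (rule conjunct1[OF conjunct2])
  moreover have "AE x in M. f x \<le> g x" using a(4) by simp
  ultimately show ?thesis using a(2,3) by simp
qed

lemma fqn_tri: fixes M :: "'a measure" and \<rho> :: "('a \<Rightarrow> ennreal) \<Rightarrow> ennreal"
  assumes "function_quasi_norm M \<rho>"
  obtains \<kappa> :: real where "\<kappa> \<ge> 1" "\<And>f g. f \<in> borel_measurable M \<Longrightarrow> g \<in> borel_measurable M \<Longrightarrow>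
         \<rho> (\<lambda>x. f x + g x) \<le> ennreal \<kappa> * (\<rho> f + \<rho> g)"
proof -
  obtain k :: real where k: "\<And>f g. f \<in> borel_measurable M \<Longrightarrow> g \<in> borel_measurable M \<Longrightarrow>
         \<rho> (\<lambda>x. f x + g x) \<le> ennreal k * (\<rho> f + \<rho> g)"
  proof -
    have "\<exists>k::real. \<forall>f \<in> borel_measurable M. \<forall>g \<in> borel_measurable M.
         \<rho> (\<lambda>x. f x + g x :: ennreal) \<le> ennreal k * (\<rho> f + \<rho> g)"
      using assms unfolding function_quasi_norm_def by (elim conjE) assumption
    then obtain k :: real where "\<forall>f \<in> borel_measurable M. \<forall>g \<in> borel_measurable M.
         \<rho> (\<lambda>x. f x + g x :: ennreal) \<le> ennreal k * (\<rho> f + \<rho> g)" by (elim exE)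
    then show ?thesis by (intro that[of k]) simp
  qed
  show ?thesis
  proof (rule that[of "max k 1"])
    fix f g :: "'a \<Rightarrow> ennreal" assume "f \<in> borel_measurable M" "g \<in> borel_measurable M"
    then have "\<rho> (\<lambda>x. f x + g x) \<le> ennreal k * (\<rho> f + \<rho> g)" by (rule k)
    also have "\<dots> \<le> ennreal (max k 1) * (\<rho> f + \<rho> g)"
      by (intro mult_right_mono ennreal_leI) auto
    finally show "\<rho> (\<lambda>x. f x + g x) \<le> ennreal (max k 1) * (\<rho> f + \<rho> g)" .
  qed auto
qed

lemma fqn_zero: assumes "function_quasi_norm M \<rho>" shows "\<rho> (\<lambda>x. 0) = 0"
  using fqn_hom[OF assms, of "\<lambda>x. 0" 0] by simp

lemma fqn_sum:
  assumes "function_quasi_norm M \<rho>" "\<kappa> \<ge> 1"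
    and tri: "\<And>f g. f \<in> borel_measurable M \<Longrightarrow> g \<in> borel_measurable M \<Longrightarrow>
         \<rho> (\<lambda>x. f x + g x) \<le> ennreal \<kappa> * (\<rho> f + \<rho> g)"
  shows "(\<And>k. u k \<in> borel_measurable M) \<Longrightarrow>
    \<rho> (\<lambda>x. \<Sum>k<N. u k x) \<le> (\<Sum>k<N. ennreal (\<kappa>^(Suc k)) * \<rho> (u k))"
proof (induction N arbitrary: u)
  case 0
  then show ?case using fqn_zero[OF assms(1)] by simp
next
  case (Suc N)
  have m: "(\<lambda>x. \<Sum>k<N. u (Suc k) x) \<in> borel_measurable M" using Suc.prems by (intro borel_measurable_sum) auto
  have "\<rho> (\<lambda>x. \<Sum>k<Suc N. u k x) = \<rho> (\<lambda>x. u 0 x + (\<Sum>k<N. u (Suc k) x))"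
    by (simp only: sum.lessThan_Suc_shift)
  also have "\<dots> \<le> ennreal \<kappa> * (\<rho> (u 0) + \<rho> (\<lambda>x. \<Sum>k<N. u (Suc k) x))"
    by (rule tri[OF Suc.prems m])
  also have "\<dots> \<le> ennreal \<kappa> * (\<rho> (u 0) + (\<Sum>k<N. ennreal (\<kappa>^(Suc k)) * \<rho> (u (Suc k))))"
    by (intro mult_left_mono add_left_mono Suc.IH Suc.prems) auto
  also have "\<dots> = ennreal (\<kappa>^1) * \<rho> (u 0) + (\<Sum>k<N. ennreal (\<kappa>^(Suc (Suc k))) * \<rho> (u (Suc k)))"
    using assms(2) by (simp add: distrib_left sum_distrib_left mult.assoc[symmetric] ennreal_mult[symmetric])
  also have "\<dots> = (\<Sum>k<Suc N. ennreal (\<kappa>^(Suc k)) * \<rho> (u k))"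
    by (subst sum.lessThan_Suc_shift) simp
  finally show ?case .
qed

theorem proposition3p16:
  fixes M :: "'a measure"
    and lam \<rho> :: "('a \<Rightarrow> ennreal) \<Rightarrow> ennreal"
  assumes "sigma_finite_measure M"
    and "function_quasi_norm M lam"
    and "function_quasi_norm M \<rho>"
    and "weak_Fatou M \<rho>"
  shows "dominates M \<rho> lam \<longleftrightarrow>
         {f \<in> borel_measurable M. \<rho> f < \<infinity>} \<subseteq> {f \<in> borel_measurable M. lam f < \<infinity>}"
proof
  assume "dominates M \<rho> lam"
  then obtain C :: real where C: "\<And>f. f \<in> borel_measurable M \<Longrightarrow> lam f \<le> ennreal C * \<rho> f"
    unfolding dominates_def by blast
  show "{f \<in> borel_measurable M. \<rho> f < \<infinity>} \<subseteq> {f \<in> borel_measurable M. lam f < \<infinity>}"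
  proof (rule subsetI)
    fix f assume "f \<in> {f \<in> borel_measurable M. \<rho> f < \<infinity>}"
    then have f: "f \<in> borel_measurable M" "\<rho> f < \<infinity>" by simp_all
    have "ennreal C * \<rho> f < \<infinity>" using f(2)
      by (simp add: ennreal_mult_less_top)
    then have "lam f < \<infinity>" using C[OF f(1)] by (rule le_less_trans[rotated])
    then show "f \<in> {f \<in> borel_measurable M. lam f < \<infinity>}" using f(1) by simp
  qed
next
  assume incl: "{f \<in> borel_measurable M. \<rho> f < \<infinity>} \<subseteq> {f \<in> borel_measurable M. lam f < \<infinity>}"
  obtain \<kappa> :: real where k1: "\<kappa> \<ge> 1" and tri: "\<And>f g. f \<in> borel_measurable M \<Longrightarrow> g \<in> borel_measurable M \<Longrightarrow>
         \<rho> (\<lambda>x. f x + g x) \<le> ennreal \<kappa> * (\<rho> f + \<rho> g)"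
    by (rule fqn_tri[OF assms(3)]) (rule that)
  have claim: "\<exists>C::real. C \<ge> 1 \<and> (\<forall>f \<in> borel_measurable M. \<rho> f \<le> 1 \<longrightarrow> lam f \<le> ennreal C)"
  proof (rule ccontr)
    assume nc: "\<not> ?thesis"
    have ex: "\<forall>n::nat. \<exists>f. f \<in> borel_measurable M \<and> \<rho> f \<le> 1 \<and> ennreal (real n * (2*\<kappa>)^n) < lam f"
    proof
      fix n :: nat
      have "\<not> (\<forall>f \<in> borel_measurable M. \<rho> f \<le> 1 \<longrightarrow> lam f \<le> ennreal (max 1 (real n * (2*\<kappa>)^n)))"
      proof
        assume H: "\<forall>f \<in> borel_measurable M. \<rho> f \<le> 1 \<longrightarrow> lam f \<le> ennreal (max 1 (real n * (2*\<kappa>)^n))"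
        have "max 1 (real n * (2*\<kappa>)^n) \<ge> 1" by simp
        with H have "\<exists>C::real. C \<ge> 1 \<and> (\<forall>f \<in> borel_measurable M. \<rho> f \<le> 1 \<longrightarrow> lam f \<le> ennreal C)"
          by (intro exI[of _ "max 1 (real n * (2*\<kappa>)^n)"] conjI)
        with nc show False by (rule notE)
      qed
      then obtain f where f: "f \<in> borel_measurable M" "\<rho> f \<le> 1"
        "ennreal (max 1 (real n * (2*\<kappa>)^n)) < lam f" by (auto simp: not_le)
      have le: "ennreal (real n * (2*\<kappa>)^n) \<le> ennreal (max 1 (real n * (2*\<kappa>)^n))"
        by (intro ennreal_leI) simp
      have lt: "ennreal (real n * (2*\<kappa>)^n) < lam f" using le f(3) by (rule le_less_trans)
      show "\<exists>f. f \<in> borel_measurable M \<and> \<rho> f \<le> 1 \<and> ennreal (real n * (2*\<kappa>)^n) < lam f"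
        using f(1,2) lt by (intro exI[of _ f] conjI)
    qed
    then obtain h where h: "\<And>n. h n \<in> borel_measurable M" "\<And>n. \<rho> (h n) \<le> 1"
      "\<And>n. ennreal (real n * (2*\<kappa>)^n) < lam (h n)"
    proof -
      from choice[OF ex] obtain h where "\<forall>n. h n \<in> borel_measurable M \<and> \<rho> (h n) \<le> 1 \<and> ennreal (real n * (2*\<kappa>)^n) < lam (h n)"
        by (elim exE)
      then show ?thesis by (intro that[of h]) simp_all
    qed
    define q where "q = 1 / (2*\<kappa>)"
    have q0: "q \<ge> 0" using k1 by (simp add: q_def)
    define g where "g n x = ennreal (q^n) * h n x" for n x
    have gm: "g n \<in> borel_measurable M" for n unfolding g_def using h(1) by (intro borel_measurable_times_ennreal) auto
    have rg: "\<rho> (g n) \<le> ennreal (q^n)" for n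
    proof -
      have "\<rho> (g n) = ennreal (q^n) * \<rho> (h n)"
        unfolding g_def by (rule fqn_hom[OF assms(3) h(1)]) (simp add: q0)
      also have "\<dots> \<le> ennreal (q^n) * 1" by (intro mult_left_mono h(2)) auto
      finally show ?thesis by simp
    qed
    have lg: "ennreal (real n) \<le> lam (g n)" for n
    proof -
      have "lam (g n) = ennreal (q^n) * lam (h n)"
        unfolding g_def by (rule fqn_hom[OF assms(2) h(1)]) (simp add: q0)
      also have "\<dots> \<ge> ennreal (q^n) * ennreal (real n * (2*\<kappa>)^n)"
        using h(3)[of n] by (intro mult_left_mono) auto
      also have "ennreal (q^n) * ennreal (real n * (2*\<kappa>)^n) = ennreal (real n * (q * (2*\<kappa>))^n)"
        using q0 k1 by (simp add: ennreal_mult[symmetric] power_mult_distrib mult_ac)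
      also have "q * (2*\<kappa>) = 1" using k1 by (simp add: q_def)
      finally show ?thesis by simp
    qed
    define G where "G N x = (\<Sum>k<N. g k x)" for N x
    have Gm: "G N \<in> borel_measurable M" for N unfolding G_def using gm by (intro borel_measurable_sum) auto
    have Ginc: "G N x \<le> G (Suc N) x" for N x unfolding G_def by simp
    have geo: "(\<Sum>k<N. \<kappa> * (1/2)^k) \<le> 2 * \<kappa>" for N
    proof -
      have s: "summable (\<lambda>k. (1/2::real)^k)" by (rule summable_geometric) simp
      have "(\<Sum>k<N. (1/2::real)^k) \<le> (\<Sum>k. (1/2)^k)"
        by (rule sum_le_suminf[OF s]) auto
      also have "\<dots> = 2" using suminf_geometric[of "1/2::real"] by simp
      finally show ?thesis using k1 by (simp add: sum_distrib_left[symmetric])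
    qed
    have rG: "\<rho> (G N) \<le> ennreal (2*\<kappa>)" for N
    proof -
      have "\<rho> (G N) \<le> (\<Sum>k<N. ennreal (\<kappa>^(Suc k)) * \<rho> (g k))"
        unfolding G_def by (rule fqn_sum[OF assms(3) k1 tri gm])
      also have "\<dots> \<le> (\<Sum>k<N. ennreal (\<kappa>^(Suc k)) * ennreal (q^k))"
        by (intro sum_mono mult_left_mono rg) auto
      also have "\<dots> = (\<Sum>k<N. ennreal (\<kappa> * (1/2)^k))"
      proof (rule sum.cong[OF refl])
        fix k
        have "\<kappa>^(Suc k) * q^k = \<kappa> * (\<kappa> * q)^k" by (simp add: power_mult_distrib)
        also have "\<kappa> * q = 1/2" using k1 by (simp add: q_def)
        finally show "ennreal (\<kappa>^(Suc k)) * ennreal (q^k) = ennreal (\<kappa> * (1/2)^k)"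
          using k1 q0 by (simp add: ennreal_mult[symmetric])
      qed
      also have "\<dots> = ennreal (\<Sum>k<N. \<kappa> * (1/2)^k)"
        using k1 by (intro sum_ennreal) auto
      also have "\<dots> \<le> ennreal (2*\<kappa>)" by (intro ennreal_leI geo)
      finally show ?thesis .
    qed
    have "(SUP N. \<rho> (G N)) < \<infinity>"
    proof -
      have "(SUP N. \<rho> (G N)) \<le> ennreal (2*\<kappa>)" by (rule SUP_least) (rule rG)
      then show ?thesis by (rule le_less_trans) simp
    qed
    then have "\<rho> (\<lambda>x. SUP N. G N x) < \<infinity>"
    proof -
      have W: "(\<forall>n. G n \<in> borel_measurable M) \<longrightarrow> (\<forall>n. AE x in M. G n x \<le> G (Suc n) x) \<longrightarrow>
          (SUP n. \<rho> (G n)) < \<infinity> \<longrightarrow> \<rho> (\<lambda>x. SUP n. G n x) < \<infinity>"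
        using assms(4) unfolding weak_Fatou_def by (rule spec)
      have a1: "\<forall>n. G n \<in> borel_measurable M" using Gm by simp
      have a2: "\<forall>n. AE x in M. G n x \<le> G (Suc n) x" using Ginc by simp
      show ?thesis using W a1 a2 \<open>(SUP N. \<rho> (G N)) < \<infinity>\<close> by (simp only: simp_thms)
    qed
    moreover have Sm: "(\<lambda>x. SUP N. G N x) \<in> borel_measurable M" using Gm by (intro borel_measurable_SUP) auto
    ultimately have "(\<lambda>x. SUP N. G N x) \<in> {f \<in> borel_measurable M. \<rho> f < \<infinity>}" by simp
    then have "(\<lambda>x. SUP N. G N x) \<in> {f \<in> borel_measurable M. lam f < \<infinity>}" using incl by (rule rev_subsetD)
    then have fin: "lam (\<lambda>x. SUP N. G N x) < \<infinity>" by simp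
    have "ennreal (real n) \<le> lam (\<lambda>x. SUP N. G N x)" for n
    proof -
      have "g n x \<le> (SUP N. G N x)" for x
      proof -
        have "g n x \<le> G (Suc n) x" unfolding G_def by simp
        also have "\<dots> \<le> (SUP N. G N x)" by (rule SUP_upper) simp
        finally show ?thesis .
      qed
      then have "lam (g n) \<le> lam (\<lambda>x. SUP N. G N x)"
        by (intro fqn_mono[OF assms(2) gm Sm])
      with lg show ?thesis by (rule order.trans)
    qed
    moreover have fin': "lam (\<lambda>x. SUP N. G N x) < top" using fin by simp
    moreover obtain n where "lam (\<lambda>x. SUP N. G N x) < of_nat n"
      using ennreal_Ex_less_of_nat[OF fin'] by (elim exE)
    ultimately show False
      by (metis ennreal_of_nat_eq_real_of_nat leD)
  qed
  then obtain C :: real where C1: "C \<ge> 1" and C: "\<And>f. f \<in> borel_measurable M \<Longrightarrow> \<rho> f \<le> 1 \<Longrightarrow> lam f \<le> ennreal C"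
    by blast
  show "dominates M \<rho> lam"
    unfolding dominates_def
  proof (rule exI[of _ C], intro ballI)
    fix f :: "'a \<Rightarrow> ennreal" assume f: "f \<in> borel_measurable M"
    consider "\<rho> f = \<infinity>" | "\<rho> f = 0" | "0 < \<rho> f" "\<rho> f < \<infinity>"
    proof (cases "\<rho> f = \<infinity>")
      case False
      show ?thesis
      proof (cases "\<rho> f = 0")
        case False2: False
        have "0 < \<rho> f" using False2 by (simp add: gr_zeroI)
        moreover have "\<rho> f < \<infinity>" using False by (simp add: top.not_eq_extremum)
        ultimately show ?thesis by (rule that(3))
      qed (rule that(2))
    qed (rule that(1))
    then show "lam f \<le> ennreal C * \<rho> f"
    proof cases
      case 1
      then show ?thesis using C1 by (simp add: ennreal_mult_top)
    next
      case 2
      have "lam f = 0"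
      proof (rule ccontr)
        assume "lam f \<noteq> 0"
        then have "0 < lam f" by (simp add: gr_zeroI)
        then obtain y where y: "0 < y" "y < lam f" using dense by blast
        then have "y \<noteq> \<infinity>" using top.not_eq_extremum by fastforce
        then obtain e where e: "y = ennreal e" "e \<ge> 0" by (cases y) auto
        with y have e0: "e > 0" by auto
        define t where "t = 2 * C / e"
        have t0: "t \<ge> 0" using C1 e0 by (simp add: t_def)
        have "\<rho> (\<lambda>x. ennreal t * f x) = 0"
          using fqn_hom[OF assms(3) f t0] 2 by simp
        then have "lam (\<lambda>x. ennreal t * f x) \<le> ennreal C"
          using C[of "\<lambda>x. ennreal t * f x"] f borel_measurable_times_ennreal[OF borel_measurable_const f] by simp
        then have "ennreal t * lam f \<le> ennreal C" using fqn_hom[OF assms(2) f t0] by simp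
        moreover have "ennreal t * ennreal e \<le> ennreal t * lam f"
          using y e by (intro mult_left_mono) auto
        moreover have "ennreal t * ennreal e = ennreal (2*C)"
          using t0 e0 by (simp add: ennreal_mult[symmetric] t_def)
        ultimately have "ennreal (2*C) \<le> ennreal C" by simp
        then show False using C1 by (simp add: ennreal_le_iff)
      qed
      then show ?thesis by simp
    next
      case 3
      define r where "r = enn2real (\<rho> f)"
      have rf: "\<rho> f = ennreal r" using 3 unfolding r_def by (simp add: ennreal_enn2real_if)
      have r0: "r > 0" using 3 unfolding r_def by (simp add: enn2real_positive_iff)
      define h where "h x = ennreal (1/r) * f x" for x
      have hm: "h \<in> borel_measurable M" unfolding h_def using f by (intro borel_measurable_times_ennreal) auto
      have "\<rho> h = ennreal (1/r) * ennreal r" unfolding h_def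
        using fqn_hom[OF assms(3) f, of "1/r"] r0 rf by simp
      also have "\<dots> = 1" using r0 by (simp add: ennreal_mult[symmetric])
      finally have "lam h \<le> ennreal C" using C[OF hm] by simp
      have fh: "f = (\<lambda>x. ennreal r * h x)"
      proof
        fix x
        have "ennreal r * h x = (ennreal r * ennreal (1/r)) * f x" by (simp add: h_def mult.assoc)
        also have "ennreal r * ennreal (1/r) = 1" using r0 by (simp add: ennreal_mult[symmetric])
        finally show "f x = ennreal r * h x" by simp
      qed
      have "lam f = ennreal r * lam h" by (subst fh, rule fqn_hom[OF assms(2) hm]) (use r0 in simp)
      also have "\<dots> \<le> ennreal r * ennreal C" by (intro mult_left_mono \<open>lam h \<le> ennreal C\<close>) auto
      finally show ?thesis using rf by (simp add: mult.commute)
    qed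
  qed
qed

end
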